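(* Let $n\ge1$, $k\ge1$, $\mathcal{D}=\{0,\ldots,n\}$. Every infinite sequence in $\mathcal{D}^{\mathbb{N}}$ obtained as an infinite concatenation $\mathbf{W}_{i_1}\mathbf{W}_{i_2}\mathbf{W}_{i_3}\cdots$ with $i_1,i_2,\ldots\in\{0,\ldots,n\}$ is $k$-simply normal.
   Context: Let $\mathbf{w}_0,\ldots,\mathbf{w}_{(n+1)^k-1}$ be the elements of $\mathcal{D}^k$ in strictly increasing lexicographic order. For $i=0,\ldots,n$ define $\mathbf{W}_i=\mathbf{w}_i\mathbf{w}_{i+1}\cdots\mathbf{w}_{(n+1)^k-1}\mathbf{w}_0\cdots\mathbf{w}_{i-1}$. For $\mathbf{b}\in\mathcal{D}^k$ and $\mathbf{a}\in\mathcal{D}^{\mathbb{N}}$ let $\mathrm{freq}_{\mathbf{b}}(\mathbf{a})=\lim_{m\to\infty}\frac{1}{m}\#\{1\le j\le m: a_j\cdots a_{j+k-1}=\mathbf{b}\}$ when the limit exists; $\mathbf{a}$ is $k$-simply normal if $\mathrm{freq}_{\mathbf{b}}(\mathbf{a})=(n+1)^{-k}$ for all $\mathbf{b}\in\mathcal{D}^k$. *)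

theory Defs
  imports "HOL-Analysis.Analysis" "HOL-Library.List_Lexorder"
begin

definition words :: "nat \<Rightarrow> nat \<Rightarrow> nat list set" where
  "words n k = {xs. length xs = k \<and> set xs \<subseteq> {0..n}}"

text \<open>The list w_0, ..., w_{(n+1)^k - 1} of all words of length k in strictly
  increasing lexicographic order.\<close>
definition wlist :: "nat \<Rightarrow> nat \<Rightarrow> nat list list" where
  "wlist n k = sorted_list_of_set (words n k)"

definition Wblock :: "nat \<Rightarrow> nat \<Rightarrow> nat \<Rightarrow> nat list" where
  "Wblock n k i = concat (drop i (wlist n k) @ take i (wlist n k))"

text \<open>Infinite concatenation L 0 L 1 L 2 ... of nonempty finite words, as a
  0-indexed sequence.\<close>
definition inf_concat :: "(nat \<Rightarrow> 'a list) \<Rightarrow> nat \<Rightarrow> 'a" where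
  "inf_concat L m =
     (let j = (LEAST j. m < (\<Sum>t\<le>j. length (L t)))
      in L j ! (m - (\<Sum>t<j. length (L t))))"

text \<open>Number of positions j < m (0-indexed; the paper's 1 \<le> j \<le> m) at which
  the block b occurs in a.\<close>
definition occ_count :: "(nat \<Rightarrow> nat) \<Rightarrow> nat list \<Rightarrow> nat \<Rightarrow> nat" where
  "occ_count a b m = card {j. j < m \<and> map (\<lambda>t. a (j + t)) [0..<length b] = b}"

definition k_simply_normal :: "nat \<Rightarrow> nat \<Rightarrow> (nat \<Rightarrow> nat) \<Rightarrow> bool" where
  "k_simply_normal n k a \<longleftrightarrow>
     (\<forall>b \<in> words n k.
        (\<lambda>m. real (occ_count a b m) / real m) \<longlonglongrightarrow> 1 / real (n + 1) ^ k)"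

end

theory Submission
  imports Defs
begin


fun digs :: "nat \<Rightarrow> nat \<Rightarrow> nat \<Rightarrow> nat list" where
  "digs B 0 x = []"
| "digs B (Suc k) x = (x div B^k mod B) # digs B k x"

lemma length_digs[simp]: "length (digs B k x) = k"
  by (induction k) auto

lemma digs_lt: "B > 0 \<Longrightarrow> set (digs B k x) \<subseteq> {0..<B}"
  by (induction k) auto

lemma digs_mod: "B > 0 \<Longrightarrow> digs B k x = digs B k (x mod B^k)"
proof (induction k arbitrary: x)
  case 0 then show ?case by simp
next
  case (Suc k)
  have "x mod B ^ Suc k mod B^k = x mod B^k"
    by (simp add: mod_mod_cancel)
  then have "digs B k (x mod B ^ Suc k) = digs B k x"
    using Suc.IH[of "x mod B ^ Suc k", OF Suc.prems] Suc.IH[of x, OF Suc.prems] by (simp only:)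
  moreover have "x mod B ^ Suc k div B ^ k mod B = x div B^k mod B"
  proof -
    have "x mod B ^ Suc k = B^k * (x div B^k mod B) + x mod B^k"
      unfolding power_Suc2 by (rule mod_mult2_eq)
    moreover have "B^k > 0" using Suc.prems by simp
    ultimately show ?thesis by simp
  qed
  ultimately show ?case by (simp only: digs.simps)
qed

lemma digs_eq_mod: "digs B k x = digs B k y \<Longrightarrow> x mod B^k = y mod B^k"
proof (induction k arbitrary: x y)
  case 0 then show ?case by simp
next
  case (Suc k)
  have h: "x div B^k mod B = y div B^k mod B" and "digs B k x = digs B k y"
    using Suc.prems by simp_all
  then have "x mod B^k = y mod B^k" using Suc.IH by blast
  have "x mod B ^ Suc k = B^k * (x div B^k mod B) + x mod B^k"
       "y mod B ^ Suc k = B^k * (y div B^k mod B) + y mod B^k"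
    unfolding power_Suc2 by (rule mod_mult2_eq)+
  then show ?case using h \<open>x mod B^k = y mod B^k\<close> by (simp only:)
qed

lemma digs_inj: "x < B^k \<Longrightarrow> y < B^k \<Longrightarrow> digs B k x = digs B k y \<Longrightarrow> x = y"
  using digs_eq_mod by fastforce

lemma digs_append: "digs B (a + b) x = digs B a (x div B^b) @ digs B b x"
proof (induction a)
  case 0 then show ?case by simp
next
  case (Suc a)
  have "x div B^(a+b) = x div B^b div B^a"
    by (simp only: div_mult2_eq[symmetric] power_add[symmetric] add.commute)
  then show ?case using Suc by simp
qed

lemma digs_nth: "d < k \<Longrightarrow> digs B k x ! d = x div B^(k-1-d) mod B"
proof (induction k arbitrary: d)
  case 0 then show ?case by simp
next
  case (Suc k) then show ?case by (cases d) auto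
qed

lemma digs_mono: "B > 0 \<Longrightarrow> x < y \<Longrightarrow> y < B^k \<Longrightarrow> digs B k x < digs B k y"
proof (induction k arbitrary: x y)
  case 0 then show ?case by simp
next
  case (Suc k)
  have hx: "x div B^k < B" "y div B^k < B" using Suc.prems
    by (simp_all add: less_mult_imp_div_less power_Suc2 mult.commute[of B])
  have le: "x div B^k \<le> y div B^k" using Suc.prems by (simp add: div_le_mono)
  show ?case
  proof (cases "x div B^k = y div B^k")
    case True
    have "x = B^k * (x div B^k) + x mod B^k" "y = B^k * (y div B^k) + y mod B^k" by simp_all
    moreover have "B^k * (x div B^k) = B^k * (y div B^k)" using True by simp
    ultimately
    have "x mod B^k < y mod B^k" using Suc.prems by linarith
    then have "digs B k (x mod B^k) < digs B k (y mod B^k)" using Suc.IH Suc.prems by simp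
    moreover have "digs B k x = digs B k (x mod B^k)" "digs B k y = digs B k (y mod B^k)"
      using Suc.prems digs_mod by blast+
    ultimately show ?thesis using True hx by simp
  next
    case False
    then show ?thesis using hx le by simp
  qed
qed

lemma card_words: "card (words n k) = (n+1)^k"
proof -
  have "words n k = {xs. set xs \<subseteq> {0..n} \<and> length xs = k}" unfolding words_def by auto
  then show ?thesis by (simp add: card_lists_length_eq)
qed

lemma finite_words: "finite (words n k)"
proof -
  have "words n k = {xs. set xs \<subseteq> {0..n} \<and> length xs = k}" unfolding words_def by auto
  then show ?thesis by (simp add: finite_lists_length_eq)
qed

lemma digs_words: "digs (n+1) k x \<in> words n k"
  using digs_lt[of "n+1" k x] unfolding words_def by auto

lemma digs_image: "digs (n+1) k ` {..<(n+1)^k} = words n k"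
proof (rule card_subset_eq)
  show "finite (words n k)" by (rule finite_words)
  show "digs (n+1) k ` {..<(n+1)^k} \<subseteq> words n k" using digs_words by auto
  have "inj_on (digs (n+1) k) {..<(n+1)^k}" by (auto intro: inj_onI digs_inj)
  then show "card (digs (n+1) k ` {..<(n+1)^k}) = card (words n k)"
    by (simp add: card_image card_words)
qed

lemma wlist_eq: "wlist n k = map (digs (n+1) k) [0..<(n+1)^k]"
proof -
  define xs where "xs = map (digs (n+1) k) [0..<(n+1)^k]"
  have "sorted_wrt (<) xs"
    unfolding sorted_wrt_map xs_def
    by (rule sorted_wrt_mono_rel[OF _ sorted_wrt_upt]) (auto intro!: digs_mono)
  moreover have "set xs = words n k"
    using digs_image by (simp add: atLeast0LessThan xs_def)
  moreover have "length xs = card (words n k)"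
    by (simp add: card_words xs_def)
  ultimately have "sorted_wrt (<) xs \<and> set xs = words n k \<and> length xs = card (words n k)"
    by (intro conjI)
  then have "sorted_list_of_set (words n k) = xs"
    by (rule iffD1[OF sorted_list_of_set_unique[OF finite_words]])
  then show ?thesis unfolding wlist_def xs_def .
qed



lemma concat_nth_uniform:
  "(\<forall>x\<in>set xs. length x = k) \<Longrightarrow> j < length xs \<Longrightarrow> r < k \<Longrightarrow> concat xs ! (j*k + r) = xs ! j ! r"
proof (induction xs arbitrary: j)
  case Nil then show ?case by simp
next
  case (Cons x xs)
  show ?case
  proof (cases j)
    case 0 then show ?thesis using Cons.prems by (simp add: nth_append)
  next
    case (Suc j')
    have "concat (x # xs) ! (j*k + r) = concat xs ! (j'*k + r)"
      using Cons.prems Suc by (simp add: nth_append)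
    then show ?thesis using Cons Suc by simp
  qed
qed

lemma sum_split_add: "(\<Sum>p<m+q. f p) = (\<Sum>p<m. f p) + (\<Sum>r<q. f (m + r)) " for f :: "nat \<Rightarrow> 'a::comm_monoid_add"
  by (induction q) (simp_all add: add.assoc)

lemma sum_group: "(\<Sum>p<N*k. f p) = (\<Sum>j<N. \<Sum>r<k. f (j*k + r))" for f :: "nat \<Rightarrow> 'a::comm_monoid_add"
proof (induction N)
  case 0 then show ?case by simp
next
  case (Suc N)
  have "(\<Sum>p<Suc N*k. f p) = (\<Sum>p<N*k + k. f p)" by (simp add: add.commute)
  also have "\<dots> = (\<Sum>p<N*k. f p) + (\<Sum>r<k. f (N*k + r))" by (rule sum_split_add)
  finally show ?case using Suc by simp
qed

lemma Wblock_eq: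
  assumes "c \<le> (n+1)^k"
  shows "Wblock n k c = concat (map (\<lambda>j. digs (n+1) k ((j + c) mod (n+1)^k)) [0..<(n+1)^k])"
proof -
  define N where "N = (n+1)^k"
  define f where "f = digs (n+1) k"
  have "drop c (map f [0..<N]) @ take c (map f [0..<N]) = map (\<lambda>j. f ((j + c) mod N)) [0..<N]"
  proof (rule nth_equalityI)
    show "length (drop c (map f [0..<N]) @ take c (map f [0..<N])) = length (map (\<lambda>j. f ((j + c) mod N)) [0..<N])"
      using assms N_def by simp
  next
    fix j assume "j < length (drop c (map f [0..<N]) @ take c (map f [0..<N]))"
    then have j: "j < N" using assms N_def by simp
    show "(drop c (map f [0..<N]) @ take c (map f [0..<N])) ! j = map (\<lambda>j. f ((j + c) mod N)) [0..<N] ! j"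
    proof (cases "j < N - c")
      case True
      then show ?thesis using j assms N_def by (simp add: nth_append add.commute)
    next
      case False
      then have "(j + c) mod N = j - (N - c)" using j assms N_def
        by (simp add: le_mod_geq)
      then show ?thesis using j assms N_def False by (simp add: nth_append)
    qed
  qed
  then show ?thesis unfolding Wblock_def wlist_eq f_def N_def by (rule arg_cong)
qed

lemma Wblock_len: "c \<le> (n+1)^k \<Longrightarrow> length (Wblock n k c) = (n+1)^k * k"
  by (simp add: Wblock_eq length_concat comp_def sum_list_triv)

lemma Wblock_nth:
  assumes "c \<le> (n+1)^k" "j < (n+1)^k" "r < k"
  shows "Wblock n k c ! (j*k + r) = digs (n+1) k ((j + c) mod (n+1)^k) ! r"
  using assms by (simp add: Wblock_eq concat_nth_uniform)

lemma inf_concat_uniform: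
  assumes "\<And>t. length (Lf t) = L" "L > 0"
  shows "inf_concat Lf m = Lf (m div L) ! (m mod L)"
proof -
  have s1: "(\<Sum>t\<le>j. length (Lf t)) = Suc j * L" for j using assms by simp
  have s2: "(\<Sum>t<j. length (Lf t)) = j * L" for j using assms by simp
  have "(LEAST j. m < (\<Sum>t\<le>j. length (Lf t))) = m div L"
  proof (rule Least_equality)
    show "m < (\<Sum>t\<le>m div L. length (Lf t))" unfolding s1
      using assms(2) by (simp add: dividend_less_div_times)
  next
    fix y assume "m < (\<Sum>t\<le>y. length (Lf t))"
    then have "m < Suc y * L" unfolding s1 .
    then have "m div L < Suc y" using assms(2) by (simp add: less_mult_imp_div_less)
    then show "m div L \<le> y" by simp
  qed
  then show ?thesis unfolding inf_concat_def Let_def s2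
    by (simp add: minus_div_mult_eq_mod)
qed



definition gw :: "nat \<Rightarrow> nat \<Rightarrow> nat \<Rightarrow> nat \<Rightarrow> nat list" where
  "gw B k r x = drop r (digs B k x) @ take r (digs B k ((x+1) mod B^k))"

lemma idx_bound: "j < N \<Longrightarrow> r < k \<Longrightarrow> j*k + r < N*(k::nat)"
proof -
  assume "j < N" "r < k"
  then have "Suc j * k \<le> N * k" by (intro mult_le_mono1) simp
  then show ?thesis using \<open>r < k\<close> by simp
qed

lemma pow_ge: "k \<ge> 1 \<Longrightarrow> n + 1 \<le> (n+1::nat)^k"
  by (metis One_nat_def Suc_eq_plus1 le_add2 one_le_power power_increasing power_one_right zero_less_Suc)

lemma seq_val:
  assumes "\<And>t. i t \<le> n" "k \<ge> 1" "j < (n+1)^k" "r < k"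
  shows "inf_concat (\<lambda>t. Wblock n k (i t)) (t*((n+1)^k*k) + (j*k + r))
     = digs (n+1) k ((j + i t) mod (n+1)^k) ! r"
proof -
  define N where "N = (n+1)^k"
  have ci: "i t' \<le> N" for t' using assms(1)[of t'] pow_ge[OF assms(2), of n] N_def by simp
  have L0: "N*k > 0" using assms N_def by simp
  have jr: "j*k + r < N*k" using idx_bound assms N_def by simp
  have "inf_concat (\<lambda>t. Wblock n k (i t)) (t*(N*k) + (j*k + r))
     = Wblock n k (i ((t*(N*k) + (j*k + r)) div (N*k))) ! ((t*(N*k) + (j*k + r)) mod (N*k))"
    by (rule inf_concat_uniform) (use ci N_def Wblock_len L0 in auto)
  also have "(t*(N*k) + (j*k + r)) div (N*k) = t" using jr L0 by simp
  also have "(t*(N*k) + (j*k + r)) mod (N*k) = j*k + r" using jr L0 by simp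
  finally show ?thesis using Wblock_nth[OF ci[of t, unfolded N_def]] assms N_def by simp
qed

lemma small_digit:
  assumes "c \<le> n" "u + 1 < k"
  shows "digs (n+1) k c ! u = 0"
proof -
  have "n + 1 \<le> (n+1)^(k-1-u)" using pow_ge[of "k-1-u" n] assms by simp
  then have "c div (n+1)^(k-1-u) = 0" using assms by simp
  then show ?thesis using assms by (simp add: digs_nth)
qed

lemma window_eq:
  assumes "\<And>t. i t \<le> n" "k \<ge> 1" "j < (n+1)^k" "r < k"
  shows "map (\<lambda>s. inf_concat (\<lambda>t. Wblock n k (i t)) (t*((n+1)^k*k) + (j*k + r) + s)) [0..<k]
     = gw (n+1) k r ((j + i t) mod (n+1)^k)"
proof (rule nth_equalityI)
  define N where "N = (n+1)^k"
  define a where "a = inf_concat (\<lambda>t. Wblock n k (i t))"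
  define x where "x = (j + i t) mod N"
  show "length (map (\<lambda>s. inf_concat (\<lambda>t. Wblock n k (i t)) (t*((n+1)^k*k) + (j*k + r) + s)) [0..<k])
     = length (gw (n+1) k r ((j + i t) mod (n+1)^k))" using assms by (simp add: gw_def)
  fix s assume "s < length (map (\<lambda>s. inf_concat (\<lambda>t. Wblock n k (i t)) (t*((n+1)^k*k) + (j*k + r) + s)) [0..<k])"
  then have s: "s < k" by simp
  have lhs: "map (\<lambda>s. inf_concat (\<lambda>t. Wblock n k (i t)) (t*((n+1)^k*k) + (j*k + r) + s)) [0..<k] ! s
      = a (t*(N*k) + (j*k + r) + s)" using s a_def N_def by simp
  have rhs: "gw (n+1) k r ((j + i t) mod (n+1)^k) ! s =
     (if s < k - r then digs (n+1) k x ! (r + s) else digs (n+1) k ((x+1) mod N) ! (s - (k - r)))"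
    using s assms unfolding gw_def x_def N_def by (simp add: nth_append)
  show "map (\<lambda>s. inf_concat (\<lambda>t. Wblock n k (i t)) (t*((n+1)^k*k) + (j*k + r) + s)) [0..<k] ! s
      = gw (n+1) k r ((j + i t) mod (n+1)^k) ! s"
    unfolding lhs rhs
  proof (cases "s < k - r")
    case True
    have "a (t*(N*k) + (j*k + r) + s) = a (t*(N*k) + (j*k + (r + s)))" by (simp add: add.assoc)
    also have "\<dots> = digs (n+1) k x ! (r + s)"
      unfolding a_def x_def N_def using True assms by (intro seq_val) auto
    finally show "a (t*(N*k) + (j*k + r) + s) = (if s < k - r then digs (n+1) k x ! (r + s)
           else digs (n+1) k ((x+1) mod N) ! (s - (k - r)))" using True by simp
  next
    case False
    define u where "u = s - (k - r)"
    have u: "u < r" "r + s = k + u" using False s assms u_def by auto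
    have "a (t*(N*k) + (j*k + r) + s) = digs (n+1) k ((x+1) mod N) ! u"
    proof (cases "j + 1 < N")
      case True
      have "(j+1)*k = j*k + k" by simp
      then have e: "t*(N*k) + (j*k + r) + s = t*(N*k) + ((j+1)*k + u)" using u by linarith
      have "a (t*(N*k) + (j*k + r) + s) = a (t*(N*k) + ((j+1)*k + u))" by (subst e) (rule refl)
      also have "\<dots> = digs (n+1) k ((j + 1 + i t) mod N) ! u"
        unfolding a_def N_def using True assms u by (intro seq_val) (auto simp: N_def)
      also have "(j + 1 + i t) mod N = (x+1) mod N" unfolding x_def by (simp add: mod_simps)
      finally show ?thesis .
    next
      case False
      then have jN: "j + 1 = N" using assms N_def by simp
      have "Suc t*(N*k) = t*(N*k) + N*k" "N*k = j*k + k" using jN[symmetric] by (simp_all add: algebra_simps)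
      then have e: "t*(N*k) + (j*k + r) + s = Suc t*(N*k) + (0*k + u)" using u by linarith
      have "a (t*(N*k) + (j*k + r) + s) = a (Suc t*(N*k) + (0*k + u))" by (subst e) (rule refl)
      also have "\<dots> = digs (n+1) k ((0 + i (Suc t)) mod N) ! u"
        unfolding a_def N_def using assms u by (intro seq_val) (auto simp: N_def)
      also have "\<dots> = 0"
      proof -
        have "i (Suc t) < N" using assms(1)[of "Suc t"] pow_ge[OF assms(2), of n] N_def by simp
        then show ?thesis using small_digit[OF assms(1)] u assms by simp
      qed
      also have "(x+1) mod N = i t"
      proof -
        have "i t < N" using assms(1)[of t] pow_ge[OF assms(2), of n] N_def by simp
        moreover have "(x + 1) mod N = (j + 1 + i t) mod N" unfolding x_def by (simp add: mod_simps)
        moreover have "j + 1 + i t = i t + N" using jN by simp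
        ultimately have "(x + 1) mod N = (i t + N) mod N" by (simp only:)
        then show ?thesis using \<open>i t < N\<close> by simp
      qed
      then have "digs (n+1) k ((x+1) mod N) ! u = 0" using small_digit[OF assms(1)] u assms by simp
      finally show ?thesis by simp
    qed
    then show "a (t*(N*k) + (j*k + r) + s) = (if s < k - r then digs (n+1) k x ! (r + s)
           else digs (n+1) k ((x+1) mod N) ! (s - (k - r)))" using False u_def by simp
  qed
qed



lemma gw_split: "r \<le> k \<Longrightarrow> gw B k r x = digs B (k-r) x @ digs B r (((x+1) mod B^k) div B^(k-r))"
proof -
  assume rk: "r \<le> k"
  have e: "digs B k y = digs B r (y div B^(k-r)) @ digs B (k-r) y" for y
    using digs_append[of B r "k-r" y] rk by simp
  show ?thesis unfolding gw_def e by simp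
qed

lemma gw_inj:
  assumes "B > 0" "r \<le> k" "x < B^k" "x' < B^k" "gw B k r x = gw B k r x'"
  shows "x = x'"
proof -
  define M where "M = B^(k-r)"
  define N where "N = B^k"
  define y where "y = (x+1) mod N"
  define y' where "y' = (x'+1) mod N"
  have NM: "N = B^r * M" unfolding M_def N_def using assms(2) by (simp add: power_add[symmetric])
  have "digs B (k-r) x @ digs B r (y div M) = digs B (k-r) x' @ digs B r (y' div M)"
    using assms(5) gw_split[OF assms(2)] unfolding y_def y'_def M_def N_def by metis
  then have d1: "digs B (k-r) x = digs B (k-r) x'" and d2: "digs B r (y div M) = digs B r (y' div M)"
    by simp_all
  have m1: "x mod M = x' mod M" using digs_eq_mod[OF d1] M_def by simp
  have Mpos: "M > 0" "N > 0" using assms(1) M_def N_def by simp_all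
  have "y < N" "y' < N" unfolding y_def y'_def using Mpos by simp_all
  then have "y div M < B^r" "y' div M < B^r" unfolding NM
    by (simp_all add: less_mult_imp_div_less mult.commute)
  then have hd: "y div M = y' div M" using digs_inj[OF _ _ d2] by simp
  have dv: "M dvd N" using NM by simp
  have "y mod M = (x+1) mod M" unfolding y_def using dv by (simp add: mod_mod_cancel)
  also have "\<dots> = (x mod M + 1) mod M" by (simp add: mod_simps)
  also have "\<dots> = (x' mod M + 1) mod M" using m1 by simp
  also have "\<dots> = (x'+1) mod M" by (simp add: mod_simps)
  also have "\<dots> = y' mod M" unfolding y'_def using dv by (simp add: mod_mod_cancel)
  finally have "y mod M = y' mod M" .
  then have "y = y'" using hd by (metis div_mult_mod_eq)
  then have "(x+1) mod N = (x'+1) mod N" unfolding y_def y'_def .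
  moreover have "x < N" "x' < N" using assms N_def by simp_all
  ultimately show "x = x'"
    by (cases "x+1 = N"; cases "x'+1 = N") auto
qed

lemma gw_words: "r \<le> k \<Longrightarrow> gw (n+1) k r x \<in> words n k"
proof -
  assume rk: "r \<le> k"
  have "set (gw (n+1) k r x) \<subseteq> set (digs (n+1) k x) \<union> set (digs (n+1) k ((x+1) mod (n+1)^k))"
    unfolding gw_def using set_drop_subset set_take_subset by fastforce
  also have "\<dots> \<subseteq> {0..n}" using digs_lt[of "n+1" k] by fastforce
  finally show ?thesis unfolding words_def gw_def using rk by simp
qed

lemma gw_image: "r \<le> k \<Longrightarrow> gw (n+1) k r ` {..<(n+1)^k} = words n k"
proof (rule card_subset_eq)
  assume rk: "r \<le> k"
  show "finite (words n k)" by (rule finite_words)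
  show "gw (n+1) k r ` {..<(n+1)^k} \<subseteq> words n k" using gw_words rk by auto
  have "inj_on (gw (n+1) k r) {..<(n+1)^k}"
    by (rule inj_onI) (use gw_inj[of "n+1" r k] rk in auto)
  then show "card (gw (n+1) k r ` {..<(n+1)^k}) = card (words n k)"
    by (simp add: card_image card_words)
qed

lemma count_one:
  assumes "r \<le> k" "b \<in> words n k"
  shows "(\<Sum>x<(n+1)^k. if gw (n+1) k r x = b then 1 else 0) = (1::nat)"
proof -
  obtain x0 where x0: "x0 < (n+1)^k" "gw (n+1) k r x0 = b"
    using assms gw_image[OF assms(1), of n] by (metis imageE lessThan_iff)
  have "(\<Sum>x<(n+1)^k. if gw (n+1) k r x = b then 1 else 0) = (\<Sum>x<(n+1)^k. if x = x0 then 1 else (0::nat))"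
  proof (rule sum.cong)
    fix x assume "x \<in> {..<(n+1)^k}"
    then have "gw (n+1) k r x = b \<longleftrightarrow> x = x0" using x0 gw_inj[of "n+1" r k x x0] assms(1) by auto
    then show "(if gw (n+1) k r x = b then 1 else 0) = (if x = x0 then 1 else (0::nat))" by simp
  qed simp
  also have "\<dots> = 1" using x0 by simp
  finally show ?thesis .
qed

lemma rot_bij:
  assumes "c \<le> N" "N > (0::nat)"
  shows "bij_betw (\<lambda>j. (j + c) mod N) {..<N} {..<N}"
proof -
  have inj: "inj_on (\<lambda>j. (j + c) mod N) {..<N}"
  proof (rule inj_on_inverseI)
    fix j :: nat assume "j \<in> {..<N}"
    have "((j + c) mod N + (N - c)) mod N = (j + c + (N - c)) mod N" by (simp add: mod_simps)
    also have "j + c + (N - c) = j + N" using assms by simp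
    also have "(j + N) mod N = j" using \<open>j \<in> {..<N}\<close> by simp
    finally show "((j + c) mod N + (N - c)) mod N = j" .
  qed
  have "(\<lambda>j. (j + c) mod N) ` {..<N} \<subseteq> {..<N}" using assms by auto
  then show ?thesis using inj endo_inj_surj[of "{..<N}"] by (simp add: bij_betw_def)
qed



lemma block_count:
  assumes "\<And>t. i t \<le> n" "k \<ge> 1" "b \<in> words n k"
  shows "(\<Sum>p<(n+1)^k*k. if map (\<lambda>s. inf_concat (\<lambda>t. Wblock n k (i t)) (t*((n+1)^k*k) + p + s)) [0..<k] = b then 1 else 0) = (k::nat)"
proof -
  define N where "N = (n+1)^k"
  define a where "a = inf_concat (\<lambda>t. Wblock n k (i t))"
  have cN: "i t \<le> N" using assms(1)[of t] pow_ge[OF assms(2), of n] N_def by simp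
  have N0: "N > 0" using N_def by simp
  have "(\<Sum>p<N*k. if map (\<lambda>s. a (t*(N*k) + p + s)) [0..<k] = b then 1 else 0)
      = (\<Sum>j<N. \<Sum>r<k. if map (\<lambda>s. a (t*(N*k) + (j*k + r) + s)) [0..<k] = b then 1 else (0::nat))"
    by (rule sum_group)
  also have "\<dots> = (\<Sum>j<N. \<Sum>r<k. if gw (n+1) k r ((j + i t) mod N) = b then 1 else (0::nat))"
    using window_eq[OF assms(1) assms(2)] unfolding a_def N_def by (intro sum.cong refl) simp
  also have "\<dots> = (\<Sum>r<k. \<Sum>j<N. if gw (n+1) k r ((j + i t) mod N) = b then 1 else (0::nat))"
    by (rule sum.swap)
  also have "\<dots> = (\<Sum>r<k. \<Sum>x<N. if gw (n+1) k r x = b then 1 else (0::nat))"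
  proof (rule sum.cong[OF refl])
    fix r
    show "(\<Sum>j<N. if gw (n+1) k r ((j + i t) mod N) = b then 1 else (0::nat)) =
          (\<Sum>x<N. if gw (n+1) k r x = b then 1 else (0::nat))"
      by (rule sum.reindex_bij_betw[OF rot_bij[OF cN N0], of "\<lambda>x. if gw (n+1) k r x = b then 1 else 0"])
  qed
  also have "\<dots> = (\<Sum>r<k. (1::nat))"
    using count_one[OF _ assms(3)] unfolding N_def by (intro sum.cong refl) simp
  also have "\<dots> = k" by simp
  finally show ?thesis unfolding a_def N_def .
qed

lemma occ_sum:
  assumes "b \<in> words n k"
  shows "occ_count a b m = (\<Sum>j<m. if map (\<lambda>s. a (j + s)) [0..<k] = b then 1 else 0)"
proof -
  have lb: "length b = k" using assms unfolding words_def by simp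
  have "{j. j < m \<and> map (\<lambda>t. a (j + t)) [0..<length b] = b} = {j \<in> {..<m}. map (\<lambda>s. a (j + s)) [0..<k] = b}"
    using lb by auto
  then have "occ_count a b m = card {j \<in> {..<m}. map (\<lambda>s. a (j + s)) [0..<k] = b}"
    unfolding occ_count_def by simp
  also have "\<dots> = (\<Sum>j \<in> {j \<in> {..<m}. map (\<lambda>s. a (j + s)) [0..<k] = b}. 1)" by simp
  also have "\<dots> = (\<Sum>j<m. if map (\<lambda>s. a (j + s)) [0..<k] = b then 1 else 0)"
    by (rule sum.inter_filter) simp
  finally show ?thesis .
qed

lemma occ_blocks:
  assumes "\<And>t. i t \<le> n" "k \<ge> 1" "b \<in> words n k"
  shows "occ_count (inf_concat (\<lambda>t. Wblock n k (i t))) b (t * ((n+1)^k*k)) = t * k"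
proof (induction t)
  case 0 then show ?case unfolding occ_count_def by simp
next
  case (Suc t)
  define L where "L = (n+1)^k*k"
  define a where "a = inf_concat (\<lambda>t. Wblock n k (i t))"
  have "occ_count a b (Suc t * L) = (\<Sum>j<t*L + L. if map (\<lambda>s. a (j + s)) [0..<k] = b then 1 else 0)"
    using occ_sum[OF assms(3)] by (simp add: add.commute)
  also have "\<dots> = (\<Sum>j<t*L. if map (\<lambda>s. a (j + s)) [0..<k] = b then 1 else 0)
     + (\<Sum>p<L. if map (\<lambda>s. a (t*L + p + s)) [0..<k] = b then 1 else 0)"
    by (simp add: sum_split_add add.assoc)
  also have "(\<Sum>j<t*L. if map (\<lambda>s. a (j + s)) [0..<k] = b then 1 else 0) = t * k"
    using Suc occ_sum[OF assms(3)] unfolding a_def L_def by simp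
  also have "(\<Sum>p<L. if map (\<lambda>s. a (t*L + p + s)) [0..<k] = b then 1 else 0) = k"
    using block_count[OF assms] unfolding a_def L_def by simp
  finally show ?case unfolding a_def L_def by simp
qed

lemma occ_mono: "m \<le> m' \<Longrightarrow> occ_count a b m \<le> occ_count a b m'"
  unfolding occ_count_def by (rule card_mono) auto



theorem proposition2p2:
  fixes n k :: nat and i :: "nat \<Rightarrow> nat"
  assumes "n \<ge> 1" and "k \<ge> 1"
    and "\<And>t. i t \<in> {0..n}"
  shows "k_simply_normal n k (inf_concat (\<lambda>t. Wblock n k (i t)))"
  unfolding k_simply_normal_def
proof
  fix b assume b: "b \<in> words n k"
  define a where "a = inf_concat (\<lambda>t. Wblock n k (i t))"
  define N where "N = (n+1)^k"
  define L where "L = N * k"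
  have it: "\<And>t. i t \<le> n" using assms(3) by simp
  have N0: "N > 0" and L0: "L > 0" using assms(2) N_def L_def by simp_all
  have RN: "real (n+1) ^ k = real N" unfolding N_def by simp
  define F where "F m = occ_count a b m" for m
  have lo: "(m div L) * k \<le> F m" for m
  proof -
    have "F ((m div L) * L) = (m div L) * k"
      unfolding F_def a_def L_def N_def by (rule occ_blocks[of i n k b, OF it assms(2) b])
    moreover have "(m div L) * L \<le> m" by simp
    ultimately show ?thesis unfolding F_def using occ_mono by metis
  qed
  have hi: "F m \<le> (m div L) * k + k" for m
  proof -
    have "F ((Suc (m div L)) * L) = Suc (m div L) * k"
      unfolding F_def a_def L_def N_def by (rule occ_blocks[of i n k b, OF it assms(2) b])
    moreover have "m \<le> (Suc (m div L)) * L" using L0 dividend_less_div_times[of L m] by simp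
    ultimately show ?thesis unfolding F_def using occ_mono by (metis mult_Suc add.commute)
  qed
  have bounds: "1 / real N - real k / real m \<le> real (F m) / real m \<and>
                real (F m) / real m \<le> 1 / real N + real k / real m" if m0: "m > 0" for m
  proof -
    define q where "q = m div L"
    have q1: "real q * real L \<le> real m" unfolding q_def
      using div_times_less_eq_dividend[of m L] by (metis of_nat_le_iff of_nat_mult)
    have q2: "real m < real q * real L + real L" unfolding q_def
      using dividend_less_div_times[OF L0, of m] by (metis add.commute of_nat_add of_nat_less_iff of_nat_mult)
    have f1: "real q * real k \<le> real (F m)" using lo[of m] unfolding q_def by (metis of_nat_le_iff of_nat_mult)
    have f2: "real (F m) \<le> real q * real k + real k" using hi[of m] unfolding q_def
      by (metis of_nat_add of_nat_le_iff of_nat_mult)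
    have RL: "real L = real N * real k" unfolding L_def by simp
    have Np: "real N > 0" using N0 by simp
    have mp: "real m > 0" using m0 by simp
    have A: "real m - real N * real k \<le> real (F m) * real N"
    proof -
      have "real (F m) * real N \<ge> real q * real k * real N" using f1 Np by (simp add: mult_right_mono)
      then show ?thesis using q2 RL by (simp add: algebra_simps)
    qed
    have B2: "real (F m) * real N \<le> real m + real N * real k"
    proof -
      have "real (F m) * real N \<le> (real q * real k + real k) * real N" using f2 Np by (simp add: mult_right_mono)
      then show ?thesis using q1 RL by (simp add: algebra_simps)
    qed
    have "1 / real N - real k / real m = (real m - real N * real k) / (real N * real m)"
      using Np mp by (simp add: field_simps)
    also have "\<dots> \<le> (real (F m) * real N) / (real N * real m)"
      using A Np mp by (intro divide_right_mono) auto
    also have "\<dots> = real (F m) / real m" using Np by simp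
    finally have L1: "1 / real N - real k / real m \<le> real (F m) / real m" .
    have "real (F m) / real m = (real (F m) * real N) / (real N * real m)" using Np by simp
    also have "\<dots> \<le> (real m + real N * real k) / (real N * real m)"
      using B2 Np mp by (intro divide_right_mono) auto
    also have "\<dots> = 1 / real N + real k / real m"
      using Np mp by (simp add: field_simps)
    finally show ?thesis using L1 by simp
  qed
  have ev: "eventually (\<lambda>m. m > (0::nat)) sequentially" by (rule eventually_gt_at_top)
  have "(\<lambda>m. real (F m) / real m) \<longlonglongrightarrow> 1 / real N"
  proof (rule tendsto_sandwich)
    show "eventually (\<lambda>m. 1 / real N - real k / real m \<le> real (F m) / real m) sequentially"
      using ev by eventually_elim (use bounds in blast)
    show "eventually (\<lambda>m. real (F m) / real m \<le> 1 / real N + real k / real m) sequentially"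
      using ev by eventually_elim (use bounds in blast)
    show "(\<lambda>m. 1 / real N - real k / real m) \<longlonglongrightarrow> 1 / real N"
      using tendsto_diff[OF tendsto_const lim_const_over_n[of "real k"]] by simp
    show "(\<lambda>m. 1 / real N + real k / real m) \<longlonglongrightarrow> 1 / real N"
      using tendsto_add[OF tendsto_const lim_const_over_n[of "real k"]] by simp
  qed
  then show "(\<lambda>m. real (occ_count (inf_concat (\<lambda>t. Wblock n k (i t))) b m) / real m)
        \<longlonglongrightarrow> 1 / real (n + 1) ^ k"
    unfolding F_def a_def RN .
qed

end
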